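(* Let $T$ be a tree with $n$ vertices. Then $\mathcal{Z}^{\mathrm{TE}}_+(T)\cong K_n$ and $\mathcal{Z}^{\mathrm{TS}}_+(T)\cong T$.
   Context: PSD forcing: vertices are colored blue or white; if $B$ is the current set of blue vertices, $C$ a connected component of $G-B$, and $u$ a blue vertex with $N_G(u)\cap V(C)=\{v\}$, then $u$ may force $v$ to become blue. A PSD forcing set is a set $B$ of initially blue vertices such that repeated application of this rule turns every vertex blue; $\mathrm{Z}_+(G)$ is the minimum size of a PSD forcing set. $\mathcal{Z}^{\mathrm{TE}}_+(G)$ (PSD token exchange graph) has as vertices the minimum PSD forcing sets of $G$, with $S_1S_2$ an edge iff $S_1\setminus S_2=\{v_1\}$ and $S_2\setminus S_1=\{v_2\}$ for some vertices $v_1,v_2$; $\mathcal{Z}^{\mathrm{TS}}_+(G)$ (PSD token sliding graph) has the same vertices and the additional requirement $v_1v_2\in E(G)$. *)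

theory Defs
  imports Main
begin

definition simple_graph :: "'a set \<Rightarrow> ('a \<Rightarrow> 'a \<Rightarrow> bool) \<Rightarrow> bool" where
  "simple_graph V E \<longleftrightarrow> finite V \<and> (\<forall>x y. E x y \<longrightarrow> E y x)
     \<and> (\<forall>x. \<not> E x x) \<and> (\<forall>x y. E x y \<longrightarrow> x \<in> V \<and> y \<in> V)"

definition connected_graph :: "'a set \<Rightarrow> ('a \<Rightarrow> 'a \<Rightarrow> bool) \<Rightarrow> bool" where
  "connected_graph V E \<longleftrightarrow> V \<noteq> {} \<and> (\<forall>u\<in>V. \<forall>v\<in>V. E\<^sup>*\<^sup>* u v)"

definition is_cycle :: "('a \<Rightarrow> 'a \<Rightarrow> bool) \<Rightarrow> 'a list \<Rightarrow> bool" where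
  "is_cycle E xs \<longleftrightarrow> length xs \<ge> 3 \<and> distinct xs
     \<and> (\<forall>i. Suc i < length xs \<longrightarrow> E (xs ! i) (xs ! Suc i))
     \<and> E (last xs) (hd xs)"

definition tree :: "'a set \<Rightarrow> ('a \<Rightarrow> 'a \<Rightarrow> bool) \<Rightarrow> bool" where
  "tree V E \<longleftrightarrow> simple_graph V E \<and> connected_graph V E \<and> (\<nexists>xs. is_cycle E xs)"

definition comp_minus :: "'a set \<Rightarrow> ('a \<Rightarrow> 'a \<Rightarrow> bool) \<Rightarrow> 'a set \<Rightarrow> 'a \<Rightarrow> 'a set" where
  "comp_minus V E B v = {w \<in> V - B. (\<lambda>x y. E x y \<and> x \<notin> B \<and> y \<notin> B)\<^sup>*\<^sup>* v w}"

definition psd_force :: "'a set \<Rightarrow> ('a \<Rightarrow> 'a \<Rightarrow> bool) \<Rightarrow> 'a set \<Rightarrow> 'a \<Rightarrow> 'a \<Rightarrow> bool" where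
  "psd_force V E B u v \<longleftrightarrow> u \<in> B \<and> v \<in> V - B
     \<and> {w. E u w} \<inter> comp_minus V E B v = {v}"

inductive psd_reach :: "'a set \<Rightarrow> ('a \<Rightarrow> 'a \<Rightarrow> bool) \<Rightarrow> 'a set \<Rightarrow> 'a set \<Rightarrow> bool"
  for V E B where
  start: "psd_reach V E B B"
| step: "psd_reach V E B S \<Longrightarrow> psd_force V E S u v \<Longrightarrow> psd_reach V E B (insert v S)"

definition psd_forcing_set :: "'a set \<Rightarrow> ('a \<Rightarrow> 'a \<Rightarrow> bool) \<Rightarrow> 'a set \<Rightarrow> bool" where
  "psd_forcing_set V E B \<longleftrightarrow> B \<subseteq> V \<and> psd_reach V E B V"

definition Z_plus :: "'a set \<Rightarrow> ('a \<Rightarrow> 'a \<Rightarrow> bool) \<Rightarrow> nat" where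
  "Z_plus V E = Min (card ` {B. psd_forcing_set V E B})"

definition min_psd_sets :: "'a set \<Rightarrow> ('a \<Rightarrow> 'a \<Rightarrow> bool) \<Rightarrow> 'a set set" where
  "min_psd_sets V E = {B. psd_forcing_set V E B \<and> card B = Z_plus V E}"

definition TE_adj :: "'a set \<Rightarrow> 'a set \<Rightarrow> bool" where
  "TE_adj S1 S2 \<longleftrightarrow> (\<exists>v1 v2. S1 - S2 = {v1} \<and> S2 - S1 = {v2})"

definition TS_adj :: "('a \<Rightarrow> 'a \<Rightarrow> bool) \<Rightarrow> 'a set \<Rightarrow> 'a set \<Rightarrow> bool" where
  "TS_adj E S1 S2 \<longleftrightarrow> (\<exists>v1 v2. S1 - S2 = {v1} \<and> S2 - S1 = {v2} \<and> E v1 v2)"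

definition K_adj :: "nat \<Rightarrow> nat \<Rightarrow> bool" where
  "K_adj x y \<longleftrightarrow> x \<noteq> y"

definition graph_iso :: "'a set \<Rightarrow> ('a \<Rightarrow> 'a \<Rightarrow> bool) \<Rightarrow> 'b set \<Rightarrow> ('b \<Rightarrow> 'b \<Rightarrow> bool) \<Rightarrow> bool" where
  "graph_iso V1 E1 V2 E2 \<longleftrightarrow> (\<exists>f. bij_betw f V1 V2
     \<and> (\<forall>x\<in>V1. \<forall>y\<in>V1. E1 x y \<longleftrightarrow> E2 (f x) (f y)))"

end

theory Submission
  imports Defs "HOL-Library.Transitive_Closure_Table"
begin

lemma path_succ:
  "rtrancl_path r x xs y \<Longrightarrow> successively r (x # xs) \<and> last (x # xs) = y"
  by (induction rule: rtrancl_path.induct) simp_all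

lemma succ_R_notin:
  "successively (\<lambda>x y. E x y \<and> x \<notin> S \<and> y \<notin> S) (w # xs) \<Longrightarrow> w \<notin> S \<Longrightarrow> \<forall>z\<in>set (w#xs). z \<notin> S"
proof (induction xs arbitrary: w)
  case Nil
  then show ?case by simp
next
  case (Cons a xs)
  have "successively (\<lambda>x y. E x y \<and> x \<notin> S \<and> y \<notin> S) (a # xs)" "a \<notin> S"
    using Cons.prems(1) by simp_all
  with Cons.IH have "\<forall>z\<in>set (a#xs). z \<notin> S" by blast
  then show ?case using Cons.prems(2) by simp
qed

lemma succ_R_E:
  "successively (\<lambda>x y. E x y \<and> x \<notin> S \<and> y \<notin> S) xs \<Longrightarrow> successively E xs"
  by (erule successively_mono) simp

lemma tree_force:
  assumes T: "tree V E" and u: "u \<in> S" and w: "w \<in> V - S" and uw: "E u w"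
  shows "psd_force V E S u w"
proof -
  have sym: "\<And>x y. E x y \<Longrightarrow> E y x" and nocyc: "\<And>xs. \<not> is_cycle E xs"
    using T unfolding tree_def simple_graph_def by auto
  let ?R = "\<lambda>x y. E x y \<and> x \<notin> S \<and> y \<notin> S"
  have "x = w" if x: "E u x" "x \<in> comp_minus V E S w" for x
  proof (rule ccontr)
    assume ne: "x \<noteq> w"
    from x have "?R\<^sup>*\<^sup>* w x" unfolding comp_minus_def by auto
    then obtain xs where "rtrancl_path ?R w xs x" unfolding rtranclp_eq_rtrancl_path by blast
    then obtain xs' where p: "rtrancl_path ?R w xs' x" and d: "distinct (w # xs')"
      by (rule rtrancl_path_distinct)
    from path_succ[OF p] have sc: "successively ?R (w # xs')" and l: "last (w # xs') = x" by auto
    have xs'ne: "xs' \<noteq> []" using l ne by auto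
    have nS: "\<forall>z\<in>set (w#xs'). z \<notin> S" using succ_R_notin[OF sc] w by auto
    have "u \<notin> set (w#xs')" using nS u by auto
    hence dist: "distinct (u # w # xs')" using d by simp
    have sc2: "successively E (u # w # xs')"
      using succ_R_E[OF sc] uw by simp
    have "is_cycle E (u # w # xs')"
      unfolding is_cycle_def
    proof (intro conjI allI impI)
      show "3 \<le> length (u # w # xs')" using xs'ne by (cases xs') auto
      show "distinct (u # w # xs')" by (rule dist)
      show "E ((u # w # xs') ! i) ((u # w # xs') ! Suc i)" if "Suc i < length (u # w # xs')" for i
        using successively_nth[OF sc2 that] .
      have "last (u # w # xs') = x" using l by simp
      then show "E (last (u # w # xs')) (hd (u # w # xs'))" using sym[OF x(1)] by simp
    qed
    with nocyc show False by blast
  qed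
  moreover have "w \<in> comp_minus V E S w" using w unfolding comp_minus_def by auto
  ultimately show ?thesis unfolding psd_force_def using u w uw by auto
qed

lemma cross_edge:
  assumes "E\<^sup>*\<^sup>* a b" "a \<in> S" "b \<notin> S"
  shows "\<exists>u w. u \<in> S \<and> w \<notin> S \<and> E u w"
  using assms by (induction rule: rtranclp_induct) auto

lemma reach_all:
  assumes T: "tree V E"
  shows "psd_reach V E B S \<Longrightarrow> S \<subseteq> V \<Longrightarrow> S \<noteq> {} \<Longrightarrow> psd_reach V E B V"
proof (induction "card (V - S)" arbitrary: S rule: less_induct)
  case less
  have fin: "finite V" and conn: "\<forall>a\<in>V. \<forall>b\<in>V. E\<^sup>*\<^sup>* a b"
    and inV: "\<And>x y. E x y \<Longrightarrow> x \<in> V \<and> y \<in> V"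
    using T unfolding tree_def simple_graph_def connected_graph_def by auto
  show ?case
  proof (cases "S = V")
    case True then show ?thesis using less by simp
  next
    case False
    then obtain b where b: "b \<in> V" "b \<notin> S" using less by auto
    obtain a where a: "a \<in> S" using less by auto
    then have "E\<^sup>*\<^sup>* a b" using conn b less(3) by auto
    then obtain u w where uw: "u \<in> S" "w \<notin> S" "E u w" using cross_edge a b by metis
    have wV: "w \<in> V" using inV uw by auto
    have f: "psd_force V E S u w" using tree_force[OF T uw(1) _ uw(3)] wV uw by auto
    have r: "psd_reach V E B (insert w S)" using psd_reach.step[OF less(2) f] .
    have "card (V - insert w S) < card (V - S)"
      using fin wV uw(2) by (intro psubset_card_mono) auto
    then show ?thesis using less(1)[OF _ r] less(3) wV by blast
  qed
qed

lemma empty_reach: "psd_reach V E {} S \<Longrightarrow> S = {}"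
  by (induction rule: psd_reach.induct) (auto simp: psd_force_def)

lemma single_forcing:
  assumes T: "tree V E" and v: "v \<in> V"
  shows "psd_forcing_set V E {v}"
  unfolding psd_forcing_set_def using v reach_all[OF T psd_reach.start[of V E "{v}"]] by auto

lemma Z_plus_tree:
  assumes T: "tree V E"
  shows "Z_plus V E = 1"
proof -
  have fin: "finite V" and ne: "V \<noteq> {}"
    using T unfolding tree_def simple_graph_def connected_graph_def by auto
  obtain v where v: "v \<in> V" using ne by auto
  let ?C = "card ` {B. psd_forcing_set V E B}"
  have "?C \<subseteq> card ` Pow V" unfolding psd_forcing_set_def by auto
  hence finC: "finite ?C" using fin by (meson finite_Pow_iff finite_imageI finite_subset)
  have one: "1 \<in> ?C" using single_forcing[OF T v] by force
  have ge: "y \<ge> 1" if "y \<in> ?C" for y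
  proof -
    obtain B where B: "psd_forcing_set V E B" "y = card B" using \<open>y \<in> ?C\<close> by auto
    have "B \<noteq> {}"
    proof
      assume "B = {}"
      then have "V = {}" using B(1) empty_reach unfolding psd_forcing_set_def by auto
      with ne show False ..
    qed
    moreover have "finite B" using B(1) fin unfolding psd_forcing_set_def by (auto intro: finite_subset)
    ultimately show ?thesis using B(2) by (simp add: Suc_le_eq card_gt_0_iff)
  qed
  show ?thesis unfolding Z_plus_def by (rule Min_eqI[OF finC ge one])
qed

lemma min_sets_tree:
  assumes T: "tree V E"
  shows "min_psd_sets V E = (\<lambda>v. {v}) ` V"
proof -
  have "B \<in> min_psd_sets V E \<longleftrightarrow> B \<in> (\<lambda>v. {v}) ` V" for B
  proof
    assume "B \<in> min_psd_sets V E"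
    then have "psd_forcing_set V E B" "card B = Suc 0"
      unfolding min_psd_sets_def using Z_plus_tree[OF T] by auto
    then show "B \<in> (\<lambda>v. {v}) ` V" unfolding card_1_singleton_iff psd_forcing_set_def by auto
  next
    assume "B \<in> (\<lambda>v. {v}) ` V"
    then obtain v where "v \<in> V" "B = {v}" by auto
    then show "B \<in> min_psd_sets V E"
      unfolding min_psd_sets_def using single_forcing[OF T] Z_plus_tree[OF T] by auto
  qed
  then show ?thesis by blast
qed

lemma TS_single: "\<not> E a a \<Longrightarrow> TS_adj E {a} {b} \<longleftrightarrow> E a b"
  unfolding TS_adj_def by (cases "a = b") auto

lemma TE_single: "TE_adj {a} {b} \<longleftrightarrow> a \<noteq> b"
  unfolding TE_adj_def by (cases "a = b") auto

lemma bij_the_elem: "bij_betw the_elem ((\<lambda>v. {v}) ` V) V"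
  by (rule bij_betw_byWitness[where f'="\<lambda>v. {v}"]) auto

theorem theorem4p7:
  fixes V :: "'a set" and E :: "'a \<Rightarrow> 'a \<Rightarrow> bool" and n :: nat
  assumes "tree V E" and "card V = n"
  shows "graph_iso (min_psd_sets V E) TE_adj {0..<n} K_adj
       \<and> graph_iso (min_psd_sets V E) (TS_adj E) V E"
proof
  have fin: "finite V" and irr: "\<And>x. \<not> E x x"
    using assms(1) unfolding tree_def simple_graph_def by auto
  have M: "min_psd_sets V E = (\<lambda>v. {v}) ` V" by (rule min_sets_tree[OF assms(1)])
  obtain h where h: "bij_betw h V {0..<n}" using ex_bij_betw_finite_nat[OF fin] assms(2) by blast
  have b: "bij_betw (h \<circ> the_elem) (min_psd_sets V E) {0..<n}"
    unfolding M by (rule bij_betw_trans[OF bij_the_elem h])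
  have "\<forall>x\<in>min_psd_sets V E. \<forall>y\<in>min_psd_sets V E. TE_adj x y \<longleftrightarrow> K_adj ((h \<circ> the_elem) x) ((h \<circ> the_elem) y)"
  proof (intro ballI)
    fix x y assume "x \<in> min_psd_sets V E" "y \<in> min_psd_sets V E"
    then obtain a b where ab: "a \<in> V" "b \<in> V" "x = {a}" "y = {b}" unfolding M by auto
    have "h a = h b \<longleftrightarrow> a = b" using h ab(1,2) unfolding bij_betw_def inj_on_def by blast
    then show "TE_adj x y \<longleftrightarrow> K_adj ((h \<circ> the_elem) x) ((h \<circ> the_elem) y)"
      using ab by (simp add: TE_single K_adj_def)
  qed
  then show "graph_iso (min_psd_sets V E) TE_adj {0..<n} K_adj"
    unfolding graph_iso_def using b by blast
  have b2: "bij_betw the_elem (min_psd_sets V E) V" unfolding M by (rule bij_the_elem)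
  have "\<forall>x\<in>min_psd_sets V E. \<forall>y\<in>min_psd_sets V E. TS_adj E x y \<longleftrightarrow> E (the_elem x) (the_elem y)"
  proof (intro ballI)
    fix x y assume "x \<in> min_psd_sets V E" "y \<in> min_psd_sets V E"
    then obtain a b where ab: "a \<in> V" "b \<in> V" "x = {a}" "y = {b}" unfolding M by auto
    then show "TS_adj E x y \<longleftrightarrow> E (the_elem x) (the_elem y)"
      using TS_single[of E a b, OF irr] by simp
  qed
  then show "graph_iso (min_psd_sets V E) (TS_adj E) V E"
    unfolding graph_iso_def using b2 by blast
qed

end
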